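(* Let $\lambda_{\max}>1$ and let $F:[0,\lambda_{\max}]\to\mathbb{R}_+$ be a continuously differentiable strictly concave function with $F(0)=0$, such that $F(x)<F^\star$ for all $x\in[0,1)$ and $F'(1)>0$. Suppose moreover that $F$ is thrice continuously differentiable on $(1,\lambda_{\max}]$, that $\lim_{x\to1^+}F''(x)<0$, and that $\sup_{x>1}|F^{(3)}(x)|\le M$ for some $M<\infty$. Then there exist $C_1,\varepsilon_0>0$ (depending on $F$) such that $q^\star(\varepsilon)\ge C_1/\sqrt{\varepsilon}$ for all $\varepsilon\in(0,\varepsilon_0]$.
   Context: A control policy is a function $\lambda:\mathbb{Z}_+\to[0,\lambda_{\max}]$; it defines a continuous-time birth–death chain on $\mathbb{Z}_+$ with rate $\lambda(q)$ from $q$ to $q+1$ and rate $1$ from $q$ to $q-1$ ($q\ge1$). Let $\mathcal S$ be the set of states reachable from $0$. The policy is stable if $\sum_{i\in\mathcal S}\prod_{q=0}^{i}\lambda(q)<\infty$ (positive recurrence on $\mathcal S$); then $\pi$ is its stationary distribution and $\bar q\sim\pi$. $F^\star=\sup\{\mathbb{E}_\alpha[F(X)]:\alpha$ a probability measure on $[0,\lambda_{\max}]$, $X\sim\alpha$, $\mathbb{E}_\alpha[X]\le1\}$; regret $R(\lambda)=F^\star-\mathbb{E}_\pi[F(\lambda(\bar q))]$; $q^\star(\varepsilon)=\inf\{\mathbb{E}_\pi[\bar q]:\lambda$ stable, $R(\lambda)\le\varepsilon\}$. *)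

theory Defs
  imports "HOL-Probability.Probability"
begin

definition strict_concave_on :: "real set \<Rightarrow> (real \<Rightarrow> real) \<Rightarrow> bool" where
  "strict_concave_on A F \<longleftrightarrow>
     (\<forall>x\<in>A. \<forall>y\<in>A. \<forall>t::real. x \<noteq> y \<and> 0 < t \<and> t < 1 \<longrightarrow>
        (1 - t) * F x + t * F y < F ((1 - t) * x + t * y))"

definition policy :: "real \<Rightarrow> (nat \<Rightarrow> real) \<Rightarrow> bool" where
  "policy lmax lam \<longleftrightarrow> (\<forall>q. 0 \<le> lam q \<and> lam q \<le> lmax)"

text \<open>States reachable from 0 in the birth-death chain (up-rate lam q, down-rate 1).\<close>
definition reachable :: "(nat \<Rightarrow> real) \<Rightarrow> nat set" where
  "reachable lam = {i. \<forall>q<i. 0 < lam q}"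

definition stable :: "(nat \<Rightarrow> real) \<Rightarrow> bool" where
  "stable lam \<longleftrightarrow> (\<lambda>i. \<Prod>q\<le>i. lam q) summable_on reachable lam"

definition stationary :: "(nat \<Rightarrow> real) \<Rightarrow> (nat \<Rightarrow> real) \<Rightarrow> bool" where
  "stationary lam p \<longleftrightarrow>
     (\<forall>i. 0 \<le> p i) \<and> (\<forall>i. i \<notin> reachable lam \<longrightarrow> p i = 0) \<and> p sums 1 \<and>
     p 0 * lam 0 = p 1 \<and>
     (\<forall>q\<ge>1. p q * (lam q + 1) = p (q - 1) * lam (q - 1) + p (q + 1))"

definition Fstar :: "real \<Rightarrow> (real \<Rightarrow> real) \<Rightarrow> real" where
  "Fstar lmax F = Sup {(LINT x:{0..lmax}|\<alpha>. F x) | \<alpha>.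
      prob_space \<alpha> \<and> sets \<alpha> = sets borel \<and> measure \<alpha> {0..lmax} = 1 \<and>
      (LINT x|\<alpha>. x) \<le> 1}"

definition regret :: "real \<Rightarrow> (real \<Rightarrow> real) \<Rightarrow> (nat \<Rightarrow> real) \<Rightarrow> (nat \<Rightarrow> real) \<Rightarrow> real" where
  "regret lmax F lam p = Fstar lmax F - (\<Sum>i. p i * F (lam i))"

definition mean_queue :: "(nat \<Rightarrow> real) \<Rightarrow> ereal" where
  "mean_queue p = (\<Sum>i. ereal (p i * real i))"

definition qstar :: "real \<Rightarrow> (real \<Rightarrow> real) \<Rightarrow> real \<Rightarrow> ereal" where
  "qstar lmax F \<epsilon> = Inf {mean_queue p | lam p.
      policy lmax lam \<and> stable lam \<and> stationary lam p \<and> regret lmax F lam p \<le> \<epsilon>}"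

end

theory Submission imports Defs begin
lemma tangent_ineq:
  fixes lmax :: real and F F' :: "real \<Rightarrow> real"
  assumes lmax: "lmax > 1"
    and deriv1: "\<forall>x\<in>{0..lmax}. (F has_real_derivative F' x) (at x within {0..lmax})"
    and concave: "strict_concave_on {0..lmax} F"
    and x: "x \<in> {0..lmax}"
  shows "F x \<le> F 1 + F' 1 * (x - 1)"
proof -
  have cv: "convex_on {0..lmax} (\<lambda>x. - F x)"
  proof (rule convex_onI)
    fix t x y :: real assume t: "t > 0" "t < 1" and xy: "x \<in> {0..lmax}" "y \<in> {0..lmax}"
    show "- F ((1 - t) *\<^sub>R x + t *\<^sub>R y) \<le> (1 - t) * - F x + t * - F y"
    proof (cases "x = y")
      case True
      then show ?thesis by (simp add: algebra_simps)
    next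
      case False
      then show ?thesis using concave t xy unfolding strict_concave_on_def by force
    qed
  qed (simp add: convex_real_interval)
  have int: "1 \<in> interior {0..lmax}" using lmax by simp
  have d: "((\<lambda>x. - F x) has_field_derivative - F' 1) (at 1 within {0..lmax})"
    using deriv1 lmax by (auto intro!: derivative_eq_intros)
  have "(\<lambda>x. - F x) x - (\<lambda>x. - F x) 1 \<ge> (- F' 1) * (x - 1)"
    by (rule convex_on_imp_above_tangent[OF cv _ int x d]) (simp add: is_interval_connected)
  then show ?thesis by (simp add: algebra_simps)
qed

lemma Fstar_ge:
  fixes lmax :: real and F F' :: "real \<Rightarrow> real"
  assumes lmax: "lmax > 1"
    and deriv1: "\<forall>x\<in>{0..lmax}. (F has_real_derivative F' x) (at x within {0..lmax})"
    and concave: "strict_concave_on {0..lmax} F"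
    and nonneg: "\<forall>x\<in>{0..lmax}. 0 \<le> F x"
    and pos: "F' 1 > 0"
  shows "F 1 \<le> Fstar lmax F"
proof -
  define B where "B = F 1 + F' 1 * lmax"
  have Fle: "F x \<le> B" if "x \<in> {0..lmax}" for x
  proof -
    have "F x \<le> F 1 + F' 1 * (x - 1)" by (rule tangent_ineq[OF lmax deriv1 concave that])
    also have "\<dots> \<le> B" unfolding B_def using that pos by (auto intro!: mult_left_mono)
    finally show ?thesis .
  qed
  have B0: "0 \<le> B" using Fle[of 0] nonneg lmax by (metis atLeastAtMost_iff less_le_not_le order.trans order_refl order_less_imp_le zero_less_one)
  have Fc: "continuous_on {0..lmax} F"
    using deriv1 by (intro DERIV_continuous_on) auto
  have meas: "(\<lambda>x. indicator {0..lmax} x *\<^sub>R F x) \<in> borel_measurable borel"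
    by (rule borel_measurable_continuous_on_indicator[OF _ Fc]) auto
  let ?S = "{(LINT x:{0..lmax}|\<alpha>. F x) | \<alpha>.
      prob_space \<alpha> \<and> sets \<alpha> = sets borel \<and> measure \<alpha> {0..lmax} = 1 \<and>
      (LINT x|\<alpha>. x) \<le> 1}"
  have bdd: "bdd_above ?S"
  proof (rule bdd_aboveI)
    fix y assume "y \<in> ?S"
    then obtain \<alpha> where y: "y = (LINT x:{0..lmax}|\<alpha>. F x)" and ps: "prob_space \<alpha>" by auto
    show "y \<le> B"
    proof (cases "integrable \<alpha> (\<lambda>x. indicator {0..lmax} x *\<^sub>R F x)")
      case True
      have "(LINT x|\<alpha>. indicator {0..lmax} x *\<^sub>R F x) \<le> B"
        by (rule prob_space.integral_le_const[OF ps True]) (auto simp: indicator_def Fle B0)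
      then show ?thesis using y by (simp add: set_lebesgue_integral_def)
    next
      case False
      then show ?thesis using y B0 by (simp add: set_lebesgue_integral_def not_integrable_integral_eq)
    qed
  qed
  let ?\<alpha> = "return borel (1::real)"
  have ps: "prob_space ?\<alpha>" by (rule prob_space_return) simp
  have "F 1 = (LINT x:{0..lmax}|?\<alpha>. F x)"
    unfolding set_lebesgue_integral_def
    by (subst integral_return[OF _ meas]) (use lmax in auto)
  moreover have "(LINT x|?\<alpha>. x) \<le> 1" by (subst integral_return) auto
  moreover have "measure ?\<alpha> {0..lmax} = 1" using lmax by (simp add: measure_return)
  ultimately have "F 1 \<in> ?S" using ps by fastforce
  then show ?thesis unfolding Fstar_def by (rule cSup_upper[OF _ bdd])
qed

lemma quad_ineq:
  fixes lmax :: real and F F' F'' :: "real \<Rightarrow> real"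
  assumes lmax: "lmax > 1"
    and deriv1: "\<forall>x\<in>{0..lmax}. (F has_real_derivative F' x) (at x within {0..lmax})"
    and cont1: "continuous_on {0..lmax} F'"
    and concave: "strict_concave_on {0..lmax} F"
    and deriv2: "\<forall>x\<in>{1<..lmax}. (F' has_real_derivative F'' x) (at x within {1<..lmax})"
    and lim2: "\<exists>L<0. (F'' \<longlongrightarrow> L) (at_right 1)"
  shows "\<exists>c>0. \<forall>x\<in>{1..lmax}. F x \<le> F 1 + F' 1 * (x - 1) - c * (x - 1)^2"
proof -
  obtain L where L: "L < 0" "(F'' \<longlongrightarrow> L) (at_right 1)" using lim2 by blast
  have "eventually (\<lambda>x. F'' x < L/2) (at_right 1)"
    using order_tendstoD(2)[OF L(2), of "L/2"] L(1) by linarith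
  then obtain d where d: "d > 1" "\<And>y. y > 1 \<Longrightarrow> y < d \<Longrightarrow> F'' y < L/2"
    using eventually_at_right[of "1::real" 2] by auto
  define b where "b = min d lmax"
  have b: "1 < b" "b \<le> lmax" "b \<le> d" using d lmax by (auto simp: b_def)
  have D1: "(F has_real_derivative F' y) (at y)" if "0 < y" "y < lmax" for y
  proof -
    have "y \<in> interior {0..lmax}" using that by simp
    then show ?thesis using deriv1 that by (metis at_within_interior atLeastAtMost_iff less_imp_le)
  qed
  have D2: "(F' has_real_derivative F'' y) (at y)" if "1 < y" "y < lmax" for y
  proof -
    have "{1<..<lmax} \<subseteq> {1<..lmax}" by auto
    then have "{1<..<lmax} \<subseteq> interior {1<..lmax}"
      by (intro interior_maximal) auto
    then have "y \<in> interior {1<..lmax}" using that by auto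
    then show ?thesis using deriv2 that by (metis at_within_interior greaterThanAtMost_iff less_imp_le)
  qed
  have Fc: "continuous_on {0..lmax} F"
    using deriv1 by (intro DERIV_continuous_on) auto
  have step1: "F' y - F' 1 \<le> (L/2) * (y - 1)" if "1 \<le> y" "y \<le> b" for y
  proof -
    have "(\<lambda>z. F' z - (L/2) * z) y \<le> (\<lambda>z. F' z - (L/2) * z) 1"
    proof (rule DERIV_nonpos_imp_decreasing_open[OF that(1)])
      fix x assume x: "1 < x" "x < y"
      have "((\<lambda>z. F' z - (L/2) * z) has_real_derivative F'' x - L/2) (at x)"
        using D2[of x] x that b by (auto intro!: derivative_eq_intros)
      moreover have "F'' x - L/2 \<le> 0" using d(2)[of x] x that b by auto
      ultimately show "\<exists>y. ((\<lambda>z. F' z - (L/2) * z) has_real_derivative y) (at x) \<and> y \<le> 0" by blast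
    next
      show "continuous_on {1..y} (\<lambda>z. F' z - L / 2 * z)"
        using that b by (intro continuous_intros continuous_on_subset[OF cont1]) auto
    qed
    then show ?thesis by (simp add: algebra_simps)
  qed
  have step2: "F y \<le> F 1 + F' 1 * (y - 1) + (L/4) * (y - 1)^2" if "1 \<le> y" "y \<le> b" for y
  proof -
    have "(\<lambda>z. F z - F' 1 * z - (L/4) * (z - 1)^2) y \<le> (\<lambda>z. F z - F' 1 * z - (L/4) * (z - 1)^2) 1"
    proof (rule DERIV_nonpos_imp_decreasing_open[OF that(1)])
      fix x assume x: "1 < x" "x < y"
      have "((\<lambda>z. F z - F' 1 * z - (L/4) * (z - 1)^2) has_real_derivative F' x - F' 1 - (L/4) * (2 * (x - 1))) (at x)"
        using D1[of x] x that b by (auto intro!: derivative_eq_intros)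
      moreover have "F' x - F' 1 - (L/4) * (2 * (x - 1)) \<le> 0" using step1[of x] x that b by (auto simp: algebra_simps)
      ultimately show "\<exists>y. ((\<lambda>z. F z - F' 1 * z - (L/4) * (z - 1)^2) has_real_derivative y) (at x) \<and> y \<le> 0" by blast
    next
      show "continuous_on {1..y} (\<lambda>z. F z - F' 1 * z - (L/4) * (z - 1)^2)"
        using that b by (intro continuous_intros continuous_on_subset[OF Fc]) auto
    qed
    then show ?thesis by (simp add: algebra_simps)
  qed
  define c0 where "c0 = - L / 4"
  have c0: "c0 > 0" using L by (simp add: c0_def)
  define c where "c = c0 * min 1 ((b - 1) / (lmax - 1))"
  have c: "c > 0" using c0 b lmax by (simp add: c_def)
  have cc0: "c \<le> c0" unfolding c_def using c0 by (metis min.cobounded1 mult.right_neutral mult_left_mono less_imp_le)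
  show ?thesis
  proof (intro exI[of _ c] conjI c ballI)
    fix x assume x: "x \<in> {1..lmax}"
    show "F x \<le> F 1 + F' 1 * (x - 1) - c * (x - 1)^2"
    proof (cases "x \<le> b")
      case True
      have "c * (x - 1)^2 \<le> c0 * (x - 1)^2"
        using cc0 by (intro mult_right_mono) auto
      then show ?thesis using step2[of x] True x by (auto simp: c0_def)
    next
      case False
      define t where "t = (b - 1) / (x - 1)"
      have t: "0 < t" "t < 1" using False b by (auto simp: t_def)
      have tx: "t * (x - 1) = b - 1" using False b by (simp add: t_def)
      have bt: "b = (1 - t) * 1 + t * x" using tx by (simp add: algebra_simps)
      have "(1 - t) * F 1 + t * F x < F ((1 - t) * 1 + t * x)"
      proof -
        have "1 \<in> {0..lmax}" "x \<in> {0..lmax}" "1 \<noteq> x" using x lmax False b by auto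
        then show ?thesis using concave t unfolding strict_concave_on_def by blast
      qed
      then have conc: "(1 - t) * F 1 + t * F x < F b" using bt by simp
      have Fb: "F b \<le> F 1 + F' 1 * (b - 1) - c0 * (b - 1)^2"
        using step2[of b] b by (simp add: c0_def)
      have "t * F x < t * (F 1 + F' 1 * (x - 1)) - c0 * (b - 1)^2"
      proof -
        have "(1 - t) * F 1 + t * F x < F 1 + F' 1 * (b - 1) - c0 * (b - 1)^2"
          using conc Fb by linarith
        moreover have "F' 1 * (b - 1) = t * (F' 1 * (x - 1))" using tx by (metis mult.left_commute mult.commute)
        ultimately show ?thesis by (simp add: algebra_simps)
      qed
      then have "t * (F x - F 1 - F' 1 * (x - 1)) < - c0 * (b - 1)^2"
        by (simp add: algebra_simps)
      then have "F x - F 1 - F' 1 * (x - 1) < - c0 * (b - 1)^2 / t"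
        using t by (simp add: field_simps)
      also have "- c0 * (b - 1)^2 / t = - c0 * (b - 1) * (x - 1)"
        using t False b by (simp add: t_def field_simps power2_eq_square)
      also have "\<dots> \<le> - c * (x - 1)^2"
      proof -
        have "c * (x - 1) \<le> c0 * ((b - 1) / (lmax - 1)) * (x - 1)"
          unfolding c_def using c0 False b by (intro mult_right_mono mult_left_mono) auto
        also have "\<dots> \<le> c0 * (b - 1)"
        proof -
          have r: "(x - 1) / (lmax - 1) \<le> 1" using x lmax by simp
          have "c0 * (b - 1) * ((x - 1) / (lmax - 1)) \<le> c0 * (b - 1)"
            using r c0 b x lmax by (intro mult_left_le) auto
          moreover have "c0 * ((b - 1) / (lmax - 1)) * (x - 1) = c0 * (b - 1) * ((x - 1) / (lmax - 1))"
            by simp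
          ultimately show ?thesis by simp
        qed
        finally have "c * (x - 1) * (x - 1) \<le> c0 * (b - 1) * (x - 1)"
          using False b by (intro mult_right_mono) auto
        then show ?thesis by (simp add: power2_eq_square)
      qed
      finally show ?thesis by simp
    qed
  qed
qed

lemma core_bound:
  fixes lmax c a \<epsilon> K0 :: real and F F' :: "real \<Rightarrow> real" and lam p :: "nat \<Rightarrow> real"
  assumes lmax: "lmax > 1"
    and c: "c > 0" and pos: "F' 1 > 0"
    and tang: "\<forall>x\<in>{0..lmax}. F x \<le> F 1 + F' 1 * (x - 1)"
    and quad: "\<forall>x\<in>{1..lmax}. F x \<le> F 1 + F' 1 * (x - 1) - c * (x - 1)^2"
    and nonneg: "\<forall>x\<in>{0..lmax}. 0 \<le> F x"
    and Fst: "F 1 \<le> Fstar lmax F"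
    and pol: "policy lmax lam" and st: "stationary lam p"
    and reg: "regret lmax F lam p \<le> \<epsilon>"
    and K0: "K0 = 1 / F' 1 + 1 / (2 * c) + 1 / 2"
    and a: "a = sqrt \<epsilon>" and eps: "0 < \<epsilon>" "\<epsilon> \<le> 1" and a8: "8 * K0 * a \<le> 1"
  shows "ereal (1 / (32 * K0 * a)) \<le> mean_queue p"
proof -
  have p0: "\<And>i. 0 \<le> p i" and psum: "p sums 1" and bal0: "p 0 * lam 0 = p 1"
    and bal: "\<And>q. q \<ge> 1 \<Longrightarrow> p q * (lam q + 1) = p (q - 1) * lam (q - 1) + p (q + 1)"
    using st unfolding stationary_def by auto
  have lam: "\<And>q. 0 \<le> lam q \<and> lam q \<le> lmax" using pol unfolding policy_def by auto
  have rec: "p (Suc q) = p q * lam q" for q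
  proof (induction q)
    case 0 then show ?case using bal0 by simp
  next
    case (Suc q)
    have "p (Suc q) * (lam (Suc q) + 1) = p q * lam q + p (Suc (Suc q))"
      using bal[of "Suc q"] by simp
    then show ?case using Suc by (simp add: algebra_simps)
  qed
  have ap: "a > 0" using a eps by simp
  have a1: "a \<le> 1" using a eps by simp
  have aa: "a * a = \<epsilon>" using a eps by (simp add: real_sqrt_mult_self)
  have summ_p: "summable p" using psum by (simp add: sums_summable)
  have s2: "(\<lambda>q. p q * lam q) sums (1 - p 0)"
  proof -
    have "summable (\<lambda>q. p (Suc q))" using summ_p by (simp add: summable_Suc_iff)
    moreover have "(\<Sum>q. p (Suc q)) = 1 - p 0" using suminf_split_head[OF summ_p] sums_unique[OF psum] by simp
    moreover have eq: "(\<lambda>q. p q * lam q) = (\<lambda>q. p (Suc q))" using rec by simp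
    ultimately show ?thesis by (metis summable_sums)
  qed
  define u where "u q = max (lam q - 1) 0" for q
  have u0: "0 \<le> u q" for q by (simp add: u_def)
  have ule: "u q \<le> lmax" for q using lam[of q] lmax by (simp add: u_def)
  have lamu: "lam q \<le> 1 + u q" for q by (simp add: u_def)
  have pw: "F (lam q) \<le> F 1 + F' 1 * (lam q - 1) - c * (u q)^2" for q
  proof (cases "lam q \<ge> 1")
    case True then show ?thesis using quad lam[of q] by (simp add: u_def)
  next
    case False then show ?thesis using tang lam[of q] by (simp add: u_def)
  qed
  have summ3: "summable (\<lambda>q. p q * (u q)^2)"
  proof (rule summable_comparison_test[of _ "\<lambda>q. lmax^2 * p q"])
    show "\<exists>N. \<forall>n\<ge>N. norm (p n * (u n)^2) \<le> lmax^2 * p n"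
      using p0 u0 ule by (auto simp: mult.commute intro!: mult_left_mono power_mono)
    show "summable (\<lambda>q. lmax^2 * p q)" using summ_p by (rule summable_mult)
  qed
  define S where "S = (\<Sum>q. p q * (u q)^2)"
  have s3: "(\<lambda>q. p q * (u q)^2) sums S" using summ3 by (simp add: S_def summable_sums)
  have S0: "0 \<le> S" unfolding S_def using summ3 p0 by (intro suminf_nonneg) auto
  define G where "G q = (F 1 - F' 1) * p q + F' 1 * (p q * lam q) - c * (p q * (u q)^2)" for q
  have sG: "G sums ((F 1 - F' 1) * 1 + F' 1 * (1 - p 0) - c * S)"
    unfolding G_def by (intro sums_diff sums_add sums_mult psum s2 s3)
  have pFle: "p q * F (lam q) \<le> G q" for q
  proof -
    have "p q * F (lam q) \<le> p q * (F 1 + F' 1 * (lam q - 1) - c * (u q)^2)"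
      using pw p0 by (intro mult_left_mono) auto
    then show ?thesis by (simp add: G_def algebra_simps)
  qed
  have summF: "summable (\<lambda>q. p q * F (lam q))"
  proof (rule summable_comparison_test[of _ "\<lambda>q. (F 1 - F' 1) * p q + F' 1 * (p q * lam q)"])
    have "norm (p n * F (lam n)) \<le> (F 1 - F' 1) * p n + F' 1 * (p n * lam n)" for n
    proof -
      have "0 \<le> p n * F (lam n)" using p0 nonneg lam[of n] by auto
      moreover have "p n * F (lam n) \<le> p n * (F 1 + F' 1 * (lam n - 1))"
        using tang p0 lam[of n] by (intro mult_left_mono) auto
      ultimately show ?thesis by (simp add: algebra_simps)
    qed
    then show "\<exists>N. \<forall>n\<ge>N. norm (p n * F (lam n)) \<le> (F 1 - F' 1) * p n + F' 1 * (p n * lam n)" by blast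
    show "summable (\<lambda>q. (F 1 - F' 1) * p q + F' 1 * (p q * lam q))"
      using psum s2 by (intro summable_add summable_mult) (auto simp: sums_summable)
  qed
  have "(\<Sum>q. p q * F (lam q)) \<le> (F 1 - F' 1) * 1 + F' 1 * (1 - p 0) - c * S"
    using sums_le[OF _ summable_sums[OF summF] sG] pFle by blast
  then have key: "F' 1 * p 0 + c * S \<le> \<epsilon>"
    using reg Fst unfolding regret_def by (simp add: algebra_simps)
  have m1: "0 \<le> c * S" "0 \<le> F' 1 * p 0" using c S0 pos p0[of 0] by auto
  have p0le: "p 0 \<le> \<epsilon> / F' 1" using key pos m1 by (simp add: field_simps)
  have Sle: "S \<le> \<epsilon> / c" using key c m1 by (simp add: field_simps)
  have pb: "p q \<le> p 0 + (\<Sum>j<q. p j * u j)" for q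
  proof (induction q)
    case 0 then show ?case by simp
  next
    case (Suc q)
    have "p (Suc q) \<le> p q * (1 + u q)" using rec[of q] lamu[of q] p0[of q] by (simp add: mult_left_mono)
    then show ?case using Suc by (simp add: algebra_simps)
  qed
  have amgm: "p j * u j \<le> p j * (u j)^2 / (2 * a) + a / 2 * p j" for j
  proof -
    have "0 \<le> p j * (u j - a)^2" using p0 by simp
    then have "2 * a * (p j * u j) \<le> p j * (u j)^2 + a * a * p j" by (simp add: power2_eq_square algebra_simps)
    then show ?thesis using ap by (simp add: field_simps)
  qed
  have pK: "p q \<le> K0 * a" for q
  proof -
    have "(\<Sum>j<q. p j * u j) \<le> (\<Sum>j<q. p j * (u j)^2 / (2 * a) + a / 2 * p j)"
      by (intro sum_mono amgm)
    also have "\<dots> = (\<Sum>j<q. p j * (u j)^2) / (2 * a) + a / 2 * (\<Sum>j<q. p j)"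
      by (simp add: sum.distrib sum_divide_distrib sum_distrib_left)
    also have "\<dots> \<le> S / (2 * a) + a / 2 * 1"
    proof (intro add_mono divide_right_mono mult_left_mono)
      show "(\<Sum>j<q. p j * (u j)^2) \<le> S" unfolding S_def
        using summ3 p0 by (intro sum_le_suminf) auto
      show "(\<Sum>j<q. p j) \<le> 1" using sum_le_suminf[OF summ_p, of "{..<q}"] p0 sums_unique[OF psum] by auto
    qed (use ap in auto)
    also have "\<dots> \<le> \<epsilon> / c / (2 * a) + a / 2"
      using divide_right_mono[OF Sle, of "2 * a"] ap by simp
    finally have "p q \<le> \<epsilon> / F' 1 + \<epsilon> / c / (2 * a) + a / 2" using pb[of q] p0le by linarith
    also have "\<epsilon> / c / (2 * a) = a / (2 * c)" using aa ap c by (simp add: field_simps)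
    also have "\<epsilon> / F' 1 \<le> a / F' 1" proof -
      have "\<epsilon> \<le> a" using aa ap a1 mult_left_le[of a a] by simp
      then show ?thesis using pos by (simp add: divide_right_mono)
    qed
    finally show ?thesis unfolding K0 using ap by (simp add: field_simps)
  qed
  have K0p: "K0 > 0"
  proof -
    have "0 < 1 / F' 1" "0 < 1 / (2 * c)" using pos c by auto
    then show ?thesis unfolding K0 by linarith
  qed
  define K where "K = nat \<lfloor>1 / (4 * K0 * a)\<rfloor>"
  have Kup: "real K \<le> 1 / (4 * K0 * a)" unfolding K_def using K0p ap by simp
  have Klo: "real K \<ge> 1 / (4 * K0 * a) - 1" unfolding K_def using K0p ap by linarith
  have sumK: "(\<Sum>i<K. p i) \<le> 1/4"
  proof -
    have "(\<Sum>i<K. p i) \<le> (\<Sum>i<K. K0 * a)" by (intro sum_mono pK)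
    also have "\<dots> = real K * (K0 * a)" by simp
    also have "\<dots> \<le> 1 / (4 * K0 * a) * (K0 * a)" using Kup K0p ap by (intro mult_right_mono) auto
    also have "\<dots> = 1/4" using K0p ap by simp
    finally show ?thesis .
  qed
  have "(\<lambda>n. \<Sum>i<n. p i) \<longlonglongrightarrow> 1" using psum by (simp add: sums_def)
  then have "eventually (\<lambda>n. 1/2 < (\<Sum>i<n. p i)) sequentially" by (rule order_tendstoD) simp
  then obtain N where N: "\<And>n. n \<ge> N \<Longrightarrow> 1/2 < (\<Sum>i<n. p i)" by (auto simp: eventually_sequentially)
  define n where "n = max N K"
  have nK: "K \<le> n" and half: "1/2 < (\<Sum>i<n. p i)" using N by (auto simp: n_def)
  have split: "(\<Sum>i<n. f i) = (\<Sum>i<K. f i) + (\<Sum>i\<in>{K..<n}. f i)" for f :: "nat \<Rightarrow> real"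
    using nK by (metis sum.atLeastLessThan_concat lessThan_atLeast0 zero_le)
  have "real K / 4 \<le> real K * ((\<Sum>i<n. p i) - (\<Sum>i<K. p i))"
  proof -
    have "1/4 \<le> (\<Sum>i<n. p i) - (\<Sum>i<K. p i)" using half sumK by linarith
    then have "real K * (1/4) \<le> real K * ((\<Sum>i<n. p i) - (\<Sum>i<K. p i))"
      by (intro mult_left_mono) auto
    then show ?thesis by simp
  qed
  also have "\<dots> = (\<Sum>i\<in>{K..<n}. p i * real K)" using split[of p] by (simp add: sum_distrib_left mult.commute)
  also have "\<dots> \<le> (\<Sum>i\<in>{K..<n}. p i * real i)" using p0 by (intro sum_mono mult_left_mono) auto
  also have "\<dots> \<le> (\<Sum>i<n. p i * real i)" using split[of "\<lambda>i. p i * real i"] p0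
    by (simp add: sum_nonneg)
  finally have low: "real K / 4 \<le> (\<Sum>i<n. p i * real i)" .
  have "1 / (32 * K0 * a) \<le> real K / 4"
  proof -
    have "1 / (8 * K0 * a) \<ge> 1" using a8 K0p ap by (simp add: field_simps)
    then have "1 / (4 * K0 * a) - 1 \<ge> 1 / (8 * K0 * a)" using K0p ap by (simp add: field_simps)
    then show ?thesis using Klo K0p ap by (simp add: field_simps)
  qed
  then have "ereal (1 / (32 * K0 * a)) \<le> (\<Sum>i<n. ereal (p i * real i))" using low by simp
  also have "\<dots> \<le> mean_queue p" unfolding mean_queue_def
    by (rule suminf_upper) (use p0 in simp)
  finally show ?thesis .
qed

theorem proposition6p1:
  fixes lmax M :: real and F F' F'' F''' :: "real \<Rightarrow> real"
  assumes lmax: "lmax > 1"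
    and nonneg: "\<forall>x\<in>{0..lmax}. 0 \<le> F x"
    and F0: "F 0 = 0"
    and deriv1: "\<forall>x\<in>{0..lmax}. (F has_real_derivative F' x) (at x within {0..lmax})"
    and cont1: "continuous_on {0..lmax} F'"
    and concave: "strict_concave_on {0..lmax} F"
    and below: "\<forall>x\<in>{0..<1}. F x < Fstar lmax F"
    and pos_deriv: "F' 1 > 0"
    and deriv2: "\<forall>x\<in>{1<..lmax}. (F' has_real_derivative F'' x) (at x within {1<..lmax})"
    and deriv3: "\<forall>x\<in>{1<..lmax}. (F'' has_real_derivative F''' x) (at x within {1<..lmax})"
    and cont3: "continuous_on {1<..lmax} F'''"
    and lim2: "\<exists>L<0. (F'' \<longlongrightarrow> L) (at_right 1)"
    and bound3: "\<forall>x\<in>{1<..lmax}. \<bar>F''' x\<bar> \<le> M"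
  shows "\<exists>C1>0. \<exists>\<epsilon>0>0. \<forall>\<epsilon>. 0 < \<epsilon> \<and> \<epsilon> \<le> \<epsilon>0 \<longrightarrow>
           ereal (C1 / sqrt \<epsilon>) \<le> qstar lmax F \<epsilon>"
proof -
  obtain c where c: "c > 0" and quad: "\<forall>x\<in>{1..lmax}. F x \<le> F 1 + F' 1 * (x - 1) - c * (x - 1)^2"
    using quad_ineq[OF lmax deriv1 cont1 concave deriv2 lim2] by blast
  have tang: "\<forall>x\<in>{0..lmax}. F x \<le> F 1 + F' 1 * (x - 1)"
    using tangent_ineq[OF lmax deriv1 concave] by blast
  have Fst: "F 1 \<le> Fstar lmax F" by (rule Fstar_ge[OF lmax deriv1 concave nonneg pos_deriv])
  define K0 where "K0 = 1 / F' 1 + 1 / (2 * c) + 1 / 2"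
  have K0p: "K0 > 0"
  proof -
    have "0 < 1 / F' 1" "0 < 1 / (2 * c)" using pos_deriv c by auto
    then show ?thesis unfolding K0_def by linarith
  qed
  define e0 where "e0 = min 1 ((1 / (8 * K0))^2)"
  have e0: "e0 > 0" using K0p by (simp add: e0_def)
  have C1: "0 < 1 / (32 * K0)" using K0p by simp
  have "\<forall>\<epsilon>. 0 < \<epsilon> \<and> \<epsilon> \<le> e0 \<longrightarrow> ereal (1 / (32 * K0) / sqrt \<epsilon>) \<le> qstar lmax F \<epsilon>"
  proof (intro allI impI)
    fix \<epsilon> :: real assume eps: "0 < \<epsilon> \<and> \<epsilon> \<le> e0"
    have e1: "\<epsilon> \<le> 1" using eps by (simp add: e0_def)
    have "sqrt \<epsilon> \<le> sqrt ((1 / (8 * K0))^2)" using eps by (intro real_sqrt_le_mono) (simp add: e0_def)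
    also have "\<dots> = 1 / (8 * K0)" using K0p by simp
    finally have a8: "8 * K0 * sqrt \<epsilon> \<le> 1" using K0p by (simp add: field_simps)
    have eq: "1 / (32 * K0) / sqrt \<epsilon> = 1 / (32 * K0 * sqrt \<epsilon>)" by simp
    have "ereal (1 / (32 * K0 * sqrt \<epsilon>)) \<le> qstar lmax F \<epsilon>"
      unfolding qstar_def
    proof (rule Inf_greatest)
      fix y assume "y \<in> {mean_queue p | lam p.
        policy lmax lam \<and> stable lam \<and> stationary lam p \<and> regret lmax F lam p \<le> \<epsilon>}"
      then obtain lam p where h: "policy lmax lam" "stable lam" "stationary lam p" "regret lmax F lam p \<le> \<epsilon>"
        and y: "y = mean_queue p" by blast
      show "ereal (1 / (32 * K0 * sqrt \<epsilon>)) \<le> y" unfolding y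
      proof (rule core_bound)
        show "lmax > 1" by (rule lmax)
        show "c > 0" by (rule c)
        show "F' 1 > 0" by (rule pos_deriv)
        show "\<forall>x\<in>{0..lmax}. F x \<le> F 1 + F' 1 * (x - 1)" by (rule tang)
        show "\<forall>x\<in>{1..lmax}. F x \<le> F 1 + F' 1 * (x - 1) - c * (x - 1)^2" by (rule quad)
        show "\<forall>x\<in>{0..lmax}. 0 \<le> F x" by (rule nonneg)
        show "F 1 \<le> Fstar lmax F" by (rule Fst)
        show "policy lmax lam" by (rule h(1))
        show "stationary lam p" by (rule h(3))
        show "regret lmax F lam p \<le> \<epsilon>" by (rule h(4))
        show "K0 = 1 / F' 1 + 1 / (2 * c) + 1 / 2" by (rule K0_def)
        show "sqrt \<epsilon> = sqrt \<epsilon>" by (rule refl)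
        show "0 < \<epsilon>" "\<epsilon> \<le> 1" "8 * K0 * sqrt \<epsilon> \<le> 1" using eps e1 a8 by auto
      qed
    qed
    then show "ereal (1 / (32 * K0) / sqrt \<epsilon>) \<le> qstar lmax F \<epsilon>" using eq by simp
  qed
  then show ?thesis using C1 e0 by blast
qed

end
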